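(* For every $m\in\mathbb Z_{\ge0}$, the kernel of $\hat H_1^{(-2)}$ restricted to the space $\mathbb C[X_{12},X_{13},X_{23}]_m$ of homogeneous polynomials of degree $m$ is $$\operatorname{Span}_{\mathbb C}\left\{\mathfrak P_{m,l,l}\;:\;0\le l\le\lfloor m/2\rfloor\right\}.$$
   Context: $\hat H_1^{(-2)}=\frac{\partial^2}{\partial X_{12}^2}+\frac{\partial^2}{\partial X_{13}^2}+\frac{X_{12}^2+X_{13}^2-X_{23}^2}{X_{12}X_{13}}\frac{\partial^2}{\partial X_{12}\partial X_{13}}+\frac{2}{X_{12}}\frac{\partial}{\partial X_{12}}+\frac{2}{X_{13}}\frac{\partial}{\partial X_{13}}$. For integers $m,k,l\ge0$ with $k+l\le m$, $\mathfrak P_{m,k,l}=X_{23}^m\,\mathcal P_k\!\left(\frac{X_{12}-X_{13}}{X_{23}}\right)\mathcal P_l\!\left(\frac{X_{12}+X_{13}}{X_{23}}\right)\in\mathbb C[X_{12},X_{13},X_{23}]$, where $\mathcal P_n$ is the Legendre polynomial of degree $n$. *)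

theory Defs
  imports "HOL-Computational_Algebra.Polynomial"
begin

text \<open>Polynomials in C[X12,X13,X23] are represented as nested univariate
polynomials: innermost variable X12, middle X13, outermost X23.\<close>

type_synonym mpoly3 = "complex poly poly poly"

definition cst3 :: "complex \<Rightarrow> mpoly3" where
  "cst3 c = [:[:[:c:]:]:]"

definition X12 :: mpoly3 where "X12 = [:[:[:0, 1:]:]:]"
definition X13 :: mpoly3 where "X13 = [:[:0, 1:]:]"
definition X23 :: mpoly3 where "X23 = [:0, 1:]"

definition mcoeff :: "mpoly3 \<Rightarrow> nat \<Rightarrow> nat \<Rightarrow> nat \<Rightarrow> complex" where
  "mcoeff p a b c = coeff (coeff (coeff p c) b) a"

definition homogeneous3 :: "nat \<Rightarrow> mpoly3 \<Rightarrow> bool" where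
  "homogeneous3 m p \<longleftrightarrow> (\<forall>a b c. mcoeff p a b c \<noteq> 0 \<longrightarrow> a + b + c = m)"

definition eval3 :: "mpoly3 \<Rightarrow> complex \<Rightarrow> complex \<Rightarrow> complex \<Rightarrow> complex" where
  "eval3 p x y z = poly (poly (poly p [:[:z:]:]) [:y:]) x"

definition d12 :: "mpoly3 \<Rightarrow> mpoly3" where "d12 p = map_poly (map_poly pderiv) p"
definition d13 :: "mpoly3 \<Rightarrow> mpoly3" where "d13 p = map_poly pderiv p"

text \<open>The operator H_1^(-2), applied to a polynomial, as a function on the
locus X12 \<noteq> 0, X13 \<noteq> 0 where its coefficients are defined.\<close>
definition H1 :: "mpoly3 \<Rightarrow> complex \<Rightarrow> complex \<Rightarrow> complex \<Rightarrow> complex" where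
  "H1 p x y z =
     eval3 (d12 (d12 p)) x y z + eval3 (d13 (d13 p)) x y z
     + (x^2 + y^2 - z^2) / (x * y) * eval3 (d12 (d13 p)) x y z
     + 2 / x * eval3 (d12 p) x y z + 2 / y * eval3 (d13 p) x y z"

definition kerH1 :: "mpoly3 set" where
  "kerH1 = {p. \<forall>x y z. x \<noteq> 0 \<longrightarrow> y \<noteq> 0 \<longrightarrow> H1 p x y z = 0}"

text \<open>Legendre polynomials via Bonnet's recursion.\<close>
fun legendre :: "nat \<Rightarrow> complex poly" where
  "legendre 0 = 1"
| "legendre (Suc 0) = [:0, 1:]"
| "legendre (Suc (Suc n)) =
     smult (1 / of_nat (n + 2))
       (smult (of_nat (2 * n + 3)) ([:0, 1:] * legendre (Suc n))
        - smult (of_nat (n + 1)) (legendre n))"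

text \<open>Frak P_{m,k,l} = X23^m P_k((X12-X13)/X23) P_l((X12+X13)/X23), expanded
as a polynomial (valid since k + l \<le> m).\<close>
definition frakP :: "nat \<Rightarrow> nat \<Rightarrow> nat \<Rightarrow> mpoly3" where
  "frakP m k l =
     (\<Sum>i\<le>k. \<Sum>j\<le>l. cst3 (coeff (legendre k) i * coeff (legendre l) j)
        * (X12 - X13) ^ i * (X12 + X13) ^ j * X23 ^ (m - i - j))"

end

theory Submission
  imports Defs
begin


definition is_der :: "('a::comm_ring_1 \<Rightarrow> 'a) \<Rightarrow> bool" where
  "is_der f \<longleftrightarrow> (\<forall>a b. f (a + b) = f a + f b) \<and> (\<forall>a b. f (a * b) = f a * b + a * f b)"

lemma is_der_0: "is_der f \<Longrightarrow> f 0 = 0"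
  unfolding is_der_def by (metis add_cancel_right_right add_0)

lemma is_der_sum: "is_der f \<Longrightarrow> f (\<Sum>i\<le>(n::nat). g i) = (\<Sum>i\<le>n. f (g i))"
  by (induct n) (auto simp: is_der_def is_der_0)

lemma is_der_map_poly:
  assumes f: "is_der f" shows "is_der (map_poly f)"
proof -
  have f0: "f 0 = 0" using f by (rule is_der_0)
  have add: "map_poly f (p + q) = map_poly f p + map_poly f q" for p q
    using f f0 by (intro poly_eqI) (simp add: coeff_map_poly is_der_def)
  have mul: "map_poly f (p * q) = map_poly f p * q + p * map_poly f q" for p q
  proof (intro poly_eqI)
    fix n
    have "coeff (map_poly f (p * q)) n = f (\<Sum>i\<le>n. coeff p i * coeff q (n-i))"
      by (simp add: coeff_map_poly f0 coeff_mult)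
    also have "\<dots> = (\<Sum>i\<le>n. f (coeff p i) * coeff q (n-i) + coeff p i * f (coeff q (n-i)))"
      using f by (simp add: is_der_sum is_der_def)
    also have "\<dots> = coeff (map_poly f p * q + p * map_poly f q) n"
      by (simp add: coeff_mult coeff_map_poly f0 sum.distrib)
    finally show "coeff (map_poly f (p * q)) n = coeff (map_poly f p * q + p * map_poly f q) n" .
  qed
  show ?thesis using add mul by (simp add: is_der_def)
qed

lemma is_der_pderiv: "is_der (pderiv :: 'a::idom poly \<Rightarrow> _)"
  by (simp add: is_der_def pderiv_add pderiv_mult algebra_simps)

lemma der_diff: "is_der f \<Longrightarrow> f (a - b) = f a - f b"
  by (metis is_der_def add_diff_cancel diff_add_cancel add_diff_cancel_right')

lemma der_simps:
  assumes "is_der f"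
  shows "f (a + b) = f a + f b" "f (a * b) = f a * b + a * f b" "f (a - b) = f a - f b" "f 0 = 0"
  using assms by (auto simp: is_der_def der_diff is_der_0)

lemma der_power: "is_der f \<Longrightarrow> f (a ^ Suc n) = of_nat (Suc n) * a ^ n * f a"
  by (induct n) (simp_all add: der_simps algebra_simps)

lemma is_der_d12: "is_der d12"
  unfolding d12_def[abs_def] by (intro is_der_map_poly is_der_pderiv)
lemma is_der_d13: "is_der d13"
  unfolding d13_def[abs_def] by (intro is_der_map_poly is_der_pderiv)
lemma is_der_d23: "is_der (pderiv :: mpoly3 \<Rightarrow> mpoly3)"
  by (rule is_der_pderiv)

lemmas d12_simps = der_simps[OF is_der_d12]
lemmas d13_simps = der_simps[OF is_der_d13]
lemmas d23_simps = der_simps[OF is_der_d23]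

lemma d12_basic: "d12 X12 = 1" "d12 X13 = 0" "d12 X23 = 0" "d12 (cst3 c) = 0"
  by (simp_all add: d12_def X12_def X13_def X23_def cst3_def map_poly_pCons pderiv_pCons pCons_one map_poly_1)
lemma d13_basic: "d13 X12 = 0" "d13 X13 = 1" "d13 X23 = 0" "d13 (cst3 c) = 0"
  by (simp_all add: d13_def X12_def X13_def X23_def cst3_def map_poly_pCons pderiv_pCons pCons_one map_poly_1)
lemma d23_basic: "pderiv X12 = 0" "pderiv X13 = 0" "pderiv X23 = 1" "pderiv (cst3 c) = 0"
  by (simp_all add: X12_def X13_def X23_def cst3_def pderiv_pCons)



lemma mpoly_eq_iff: "p = q \<longleftrightarrow> (\<forall>a b c. mcoeff p a b c = mcoeff q a b c)"
  unfolding mcoeff_def by (metis poly_eq_iff)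

lemma mcoeff_simps:
  "mcoeff (p + q) a b c = mcoeff p a b c + mcoeff q a b c"
  "mcoeff (p - q) a b c = mcoeff p a b c - mcoeff q a b c"
  "mcoeff 0 a b c = 0"
  "mcoeff (cst3 k * p) a b c = k * mcoeff p a b c"
  by (simp_all add: mcoeff_def cst3_def)

lemma mcoeff_X12: "mcoeff (X12 * p) a b c = (if a = 0 then 0 else mcoeff p (a - 1) b c)"
  by (simp add: mcoeff_def X12_def coeff_pCons split: nat.splits)
lemma mcoeff_X13: "mcoeff (X13 * p) a b c = (if b = 0 then 0 else mcoeff p a (b - 1) c)"
  by (simp add: mcoeff_def X13_def coeff_pCons split: nat.splits)
lemma mcoeff_X23: "mcoeff (X23 * p) a b c = (if c = 0 then 0 else mcoeff p a b (c - 1))"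
  by (simp add: mcoeff_def X23_def coeff_pCons split: nat.splits)

lemma mcoeff_d12: "mcoeff (d12 p) a b c = of_nat (Suc a) * mcoeff p (Suc a) b c"
  by (simp add: mcoeff_def d12_def coeff_map_poly coeff_pderiv)
lemma mcoeff_d13: "mcoeff (d13 p) a b c = of_nat (Suc b) * mcoeff p a (Suc b) c"
  by (simp add: mcoeff_def d13_def coeff_map_poly coeff_pderiv of_nat_mult_conv_smult del: of_nat_Suc)
lemma mcoeff_d23: "mcoeff (pderiv p) a b c = of_nat (Suc c) * mcoeff p a b (Suc c)"
  by (simp add: mcoeff_def coeff_pderiv of_nat_mult_conv_smult del: of_nat_Suc)

lemma eval3_simps:
  "eval3 (p + q) x y z = eval3 p x y z + eval3 q x y z"
  "eval3 (p - q) x y z = eval3 p x y z - eval3 q x y z"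
  "eval3 (p * q) x y z = eval3 p x y z * eval3 q x y z"
  "eval3 X12 x y z = x" "eval3 X13 x y z = y" "eval3 X23 x y z = z"
  "eval3 (cst3 k) x y z = k"
  by (simp_all add: eval3_def X12_def X13_def X23_def cst3_def)

definition Dop :: "mpoly3 \<Rightarrow> mpoly3" where
  "Dop p = X12 * (X13 * d12 (d12 p)) + X12 * (X13 * d13 (d13 p))
     + (X12 * (X12 * d12 (d13 p)) + X13 * (X13 * d12 (d13 p)) - X23 * (X23 * d12 (d13 p)))
     + (X13 * d12 p + X13 * d12 p) + (X12 * d13 p + X12 * d13 p)"

lemma eval3_Dop: "x \<noteq> 0 \<Longrightarrow> y \<noteq> 0 \<Longrightarrow> eval3 (Dop p) x y z = x * y * H1 p x y z"
  unfolding Dop_def H1_def eval3_simps by (simp add: field_simps power2_eq_square)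

lemma swap2: "poly (poly q [:y:]) x = poly (map_poly (\<lambda>c. poly c x) q) (y::'a::comm_ring_1)"
  by (induct q rule: pCons_induct) (simp_all add: map_poly_pCons)

lemma swap3: "poly (poly (poly q [:[:z:]:]) [:y:]) x
   = poly (map_poly (\<lambda>c. poly (poly c [:y:]) x) q) (z::'a::comm_ring_1)"
  by (induct q rule: pCons_induct) (simp_all add: map_poly_pCons)

lemma vanish1:
  fixes r :: "complex poly"
  assumes "\<And>x. x \<noteq> 0 \<Longrightarrow> poly r x = 0" shows "r = 0"
proof (rule ccontr)
  assume "r \<noteq> 0"
  then have "finite {x. poly r x = 0}" by (rule poly_roots_finite)
  moreover have "- {0} \<subseteq> {x. poly r x = 0}" using assms by auto
  ultimately have "finite (- {0::complex})" by (rule finite_subset[rotated])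
  then show False by (simp add: infinite_UNIV_char_0 )
qed

lemma vanish2:
  fixes q :: "complex poly poly"
  assumes "\<And>x y. x \<noteq> 0 \<Longrightarrow> y \<noteq> 0 \<Longrightarrow> poly (poly q [:y:]) x = 0" shows "q = 0"
proof -
  have "coeff q i = 0" for i
  proof (rule vanish1)
    fix x :: complex assume x: "x \<noteq> 0"
    have "map_poly (\<lambda>c. poly c x) q = 0"
      by (rule vanish1) (use assms x in \<open>simp add: swap2[symmetric]\<close>)
    then have "coeff (map_poly (\<lambda>c. poly c x) q) i = 0" by simp
    then show "poly (coeff q i) x = 0" by (simp add: coeff_map_poly)
  qed
  then show ?thesis by (simp add: poly_eq_iff)
qed

lemma vanish3:
  fixes q :: mpoly3
  assumes "\<And>x y z. x \<noteq> 0 \<Longrightarrow> y \<noteq> 0 \<Longrightarrow> eval3 q x y z = 0" shows "q = 0"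
proof -
  have "coeff q i = 0" for i
  proof (rule vanish2)
    fix x y :: complex assume x: "x \<noteq> 0" and y: "y \<noteq> 0"
    have "map_poly (\<lambda>c. poly (poly c [:y:]) x) q = 0"
      using assms[OF x y] by (simp add: eval3_def swap3 poly_all_0_iff_0[symmetric])
    then have "coeff (map_poly (\<lambda>c. poly (poly c [:y:]) x) q) i = 0" by simp
    then show "poly (poly (coeff q i) [:y:]) x = 0" by (simp add: coeff_map_poly)
  qed
  then show ?thesis by (simp add: poly_eq_iff)
qed

lemma kerH1_iff: "p \<in> kerH1 \<longleftrightarrow> Dop p = 0"
proof
  assume "p \<in> kerH1"
  then show "Dop p = 0" by (intro vanish3) (simp add: eval3_Dop kerH1_def)
next
  assume "Dop p = 0"
  then have "x * y * H1 p x y z = 0" if "x \<noteq> 0" "y \<noteq> 0" for x y z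
    using eval3_Dop[OF that, of p z] by (simp add: eval3_def)
  then show "p \<in> kerH1" by (simp add: kerH1_def)
qed



lemma mcoeff_2: "mcoeff (2 * q) a b c = 2 * mcoeff q a b c"
  by (simp only: mult_2 mcoeff_simps)

lemma Dop_E1:
  assumes "\<And>c. mcoeff p (Suc (Suc a)) (Suc (Suc b)) c = 0"
  shows "mcoeff (Dop p) (Suc a) (Suc b) c =
    of_nat (a+2) * of_nat (a+b+3) * mcoeff p (a+2) b c + of_nat (b+2) * of_nat (a+b+3) * mcoeff p a (b+2) c"
  unfolding Dop_def
  apply (simp add: mcoeff_simps mcoeff_X12 mcoeff_X13 mcoeff_X23 mcoeff_d12 mcoeff_d13 mcoeff_2 assms del: of_nat_Suc)
  apply (simp add: algebra_simps)
  done

lemma Dop_E2: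
  assumes "\<And>c. mcoeff p (Suc 0) (Suc (Suc b)) c = 0"
  shows "mcoeff (Dop p) 0 (Suc b) c = of_nat (b+2) * mcoeff p 1 b c"
  unfolding Dop_def
  apply (simp only: mcoeff_simps mcoeff_X12 mcoeff_X13 mcoeff_X23 mcoeff_d12 mcoeff_d13)
  apply (simp add: assms)
  apply (simp add: algebra_simps)
  using assms by auto
lemma Dop_E3:
  assumes "\<And>c. mcoeff p (Suc (Suc a)) (Suc 0) c = 0"
  shows "mcoeff (Dop p) (Suc a) 0 c = of_nat (a+2) * mcoeff p a 1 c"
  unfolding Dop_def
  apply (simp only: mcoeff_simps mcoeff_X12 mcoeff_X13 mcoeff_X23 mcoeff_d12 mcoeff_d13)
  apply (simp add: assms)
  apply (simp add: algebra_simps)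
  using assms by auto

lemma propag:
  fixes f :: "nat \<Rightarrow> complex"
  assumes fs: "f s = 0" and sn: "s \<le> n" and st: "\<And>i. i + 2 \<le> n \<Longrightarrow> (f (i+2) = 0 \<longleftrightarrow> f i = 0)"
    and "i \<le> n" "even (i + s)"
  shows "f i = 0"
proof -
  have up: "s + 2*k \<le> n \<Longrightarrow> f (s + 2*k) = 0" for k
  proof (induct k)
    case 0 then show ?case using fs by simp
  next
    case (Suc k)
    then have "f (s + 2*k) = 0" by simp
    with st[of "s + 2*k"] Suc.prems show ?case by (simp add: add.assoc)
  qed
  have down: "2*k \<le> s \<Longrightarrow> f (s - 2*k) = 0" for k
  proof (induct k)
    case 0 then show ?case using fs by simp
  next
    case (Suc k)
    then have "f (s - 2*k) = 0" by simp
    moreover have "s - 2*k = (s - 2 * Suc k) + 2" using Suc.prems by simp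
    ultimately show ?case using st[of "s - 2 * Suc k"] Suc.prems sn by simp
  qed
  show ?thesis
  proof (cases "s \<le> i")
    case True
    then obtain k where "i = s + 2*k" using \<open>even (i+s)\<close>
      by (metis add_diff_cancel_left' dvd_def even_diff_nat le_add_diff_inverse add.commute)
    then show ?thesis using up \<open>i \<le> n\<close> by simp
  next
    case False
    then obtain k where "i = s - 2*k" "2*k \<le> s" using \<open>even (i+s)\<close>
      by (metis diff_diff_cancel dvd_def even_diff_nat le_add_diff_inverse nat_le_linear add.commute diff_le_self)
    then show ?thesis using down by simp
  qed
qed

lemma nz2: "(2::complex) + of_nat k \<noteq> 0"
  using of_nat_eq_0_iff[of "k+2", where 'a=complex] by (simp add: add.commute)

lemma level_zero:
  assumes D: "Dop p = 0" and hz: "\<And>a b c. n < a + b \<Longrightarrow> mcoeff p a b c = 0"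
    and par: "odd n \<or> (\<forall>c. mcoeff p 0 n c = 0)"
    and ab: "a + b = n"
  shows "mcoeff p a b c = 0"
proof -
  have D0: "mcoeff (Dop p) a b c = 0" for a b c using D by (simp add: mcoeff_simps)
  define f where "f i = mcoeff p i (n - i) c" for i
  have st: "f (i+2) = 0 \<longleftrightarrow> f i = 0" if "i + 2 \<le> n" for i
  proof -
    define b' where "b' = n - i - 2"
    have b': "n = i + b' + 2" using that by (simp add: b'_def)
    have z: "mcoeff p (Suc (Suc i)) (Suc (Suc b')) c' = 0" for c' by (rule hz) (simp add: b')
    have "0 = mcoeff (Dop p) (Suc i) (Suc b') c" using D0 by simp
    also have "\<dots> = of_nat (i+2) * of_nat (i+b'+3) * mcoeff p (i+2) b' c + of_nat (b'+2) * of_nat (i+b'+3) * mcoeff p i (b'+2) c"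
      by (rule Dop_E1) (rule z)
    also have "\<dots> = of_nat (n+1) * (of_nat (i+2) * f (i+2) + of_nat (b'+2) * f i)"
      unfolding f_def b' by (simp add: algebra_simps)
    finally have "of_nat (i+2) * f (i+2) + of_nat (b'+2) * f i = 0"
      by (simp del: of_nat_add of_nat_Suc)
    then have "of_nat (i+2) * f (i+2) = - (of_nat (b'+2) * f i)"
      by (simp add: add_eq_0_iff2 del: of_nat_add)
    then show ?thesis using nz2[of i] nz2[of b'] by (auto simp del: of_nat_add)
  qed
  have f1: "f 1 = 0" if n1: "1 \<le> n"
  proof -
    obtain b' where b': "n = Suc b'" using n1 by (cases n) auto
    have z: "mcoeff p (Suc 0) (Suc (Suc b')) c' = 0" for c' by (rule hz) (simp add: b')
    have "0 = mcoeff (Dop p) 0 (Suc b') c" using D0 by simp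
    also have "\<dots> = of_nat (b'+2) * mcoeff p 1 b' c"
      by (rule Dop_E2) (rule z)
    finally show ?thesis using nz2[of b'] by (simp add: f_def b' del: of_nat_add)
  qed
  have f2: "f (n-1) = 0" if n1: "1 \<le> n"
  proof -
    obtain a' where a': "n = Suc a'" using n1 by (cases n) auto
    have z: "mcoeff p (Suc (Suc a')) (Suc 0) c' = 0" for c' by (rule hz) (simp add: a')
    have "0 = mcoeff (Dop p) (Suc a') 0 c" using D0 by simp
    also have "\<dots> = of_nat (a'+2) * mcoeff p a' 1 c"
      by (rule Dop_E3) (rule z)
    finally show ?thesis using nz2[of a'] by (simp add: f_def a' del: of_nat_add)
  qed
  have "f a = 0"
  proof (cases "odd a")
    case True
    then have "1 \<le> n" using ab by (cases a) auto
    show ?thesis by (rule propag[of f 1 n]) (rule f1[OF \<open>1 \<le> n\<close>], rule \<open>1 \<le> n\<close>, erule st, use ab in simp, use True in simp)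
  next
    case even: False
    show ?thesis
    proof (cases "odd n")
      case True
      then have "1 \<le> n" by (cases n) auto
      show ?thesis by (rule propag[of f "n-1" n]) (rule f2[OF \<open>1 \<le> n\<close>], simp, erule st, use ab in simp, use True even \<open>1 \<le> n\<close> in simp)
    next
      case False
      then have "f 0 = 0" using par by (simp add: f_def)
      show ?thesis by (rule propag[of f 0 n]) (rule \<open>f 0 = 0\<close>, simp, erule st, use ab in simp, use even in simp)
    qed
  qed
  moreover have "b = n - a" using ab by simp
  ultimately show ?thesis by (simp add: f_def)
qed



abbreviation LC :: "nat \<Rightarrow> nat \<Rightarrow> complex" where "LC n i \<equiv> coeff (legendre n) i"

lemma LC0: "LC 0 i = (if i = 0 then 1 else 0)"
  by (simp add: coeff_1)  
lemma LC1: "LC (Suc 0) i = (if i = 1 then 1 else 0)"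
  by (simp add: coeff_pCons split: nat.split)

lemma LCSS0: "LC (Suc (Suc n)) 0 = - (of_nat (n+1) * LC n 0) / of_nat (n+2)"
  by (simp add: field_simps)

lemma LCSS: "LC (Suc (Suc n)) (Suc i) = (of_nat (2*n+3) * LC (Suc n) i - of_nat (n+1) * LC n (Suc i)) / of_nat (n+2)"
  by (simp add: field_simps)

lemma nzS: "(of_nat (Suc k) :: complex) \<noteq> 0"
  by (metis of_nat_eq_0_iff nat.distinct(1))

lemma LC_ab: "(\<forall>i. of_nat (i+1) * LC (Suc n) (Suc i) = of_nat (n+1+i) * LC n i) \<and>
   (\<forall>i. (of_nat i - of_nat n - 1) * LC (Suc n) i = of_nat (i+1) * LC n (Suc i))"
proof (induct n)
  case 0
  show ?case by (simp only: LC0 LC1) auto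
next
  case (Suc n)
  then have a: "\<And>i. of_nat (i+1) * LC (Suc n) (Suc i) = of_nat (n+1+i) * LC n i"
    and b: "\<And>i. (of_nat i - of_nat n - 1) * LC (Suc n) i = of_nat (i+1) * LC n (Suc i)" by blast+
  have n2: "(of_nat (n+2) :: complex) \<noteq> 0" using nzS[of "n+1"] by simp
  have A: "of_nat (i+1) * LC (Suc (Suc n)) (Suc i) = of_nat (Suc n+1+i) * LC (Suc n) i" for i
  proof -
    have "of_nat (n+2) * (of_nat (i+1) * LC (Suc (Suc n)) (Suc i))
        = of_nat (i+1) * (of_nat (2*n+3) * LC (Suc n) i) - of_nat (n+1) * (of_nat (i+1) * LC n (Suc i))"
      using n2 by (simp add: LCSS field_simps)
    also have "\<dots> = of_nat (i+1) * (of_nat (2*n+3) * LC (Suc n) i) - of_nat (n+1) * ((of_nat i - of_nat n - 1) * LC (Suc n) i)"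
      by (simp only: b)
    also have "\<dots> = of_nat (n+2) * (of_nat (Suc n+1+i) * LC (Suc n) i)"
      by (simp add: algebra_simps)
    finally show ?thesis using n2 by simp
  qed
  have B: "(of_nat i - of_nat (Suc n) - 1) * LC (Suc (Suc n)) i = of_nat (i+1) * LC (Suc n) (Suc i)" for i
  proof (cases i)
    case 0
    have "LC (Suc n) 1 = of_nat (n+1) * LC n 0" using a[of 0] by simp
    then show ?thesis using 0 n2 by (simp add: LCSS0 field_simps)
  next
    case (Suc j)
    have "of_nat (n+2) * ((of_nat (Suc j) - of_nat (Suc n) - 1) * LC (Suc (Suc n)) (Suc j))
        = of_nat (2*n+3) * ((of_nat j - of_nat n - 1) * LC (Suc n) j) - (of_nat j - of_nat n - 1) * of_nat (n+1) * LC n (Suc j)"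
      using n2 by (simp add: LCSS field_simps)
    also have "\<dots> = of_nat (2*n+3) * (of_nat (j+1) * LC n (Suc j)) - (of_nat j - of_nat n - 1) * of_nat (n+1) * LC n (Suc j)"
      by (simp only: b)
    also have "\<dots> = of_nat (n+2) * (of_nat (n+1+Suc j) * LC n (Suc j))"
      by (simp add: algebra_simps)
    also have "\<dots> = of_nat (n+2) * (of_nat (Suc j + 1) * LC (Suc n) (Suc (Suc j)))"
      by (simp only: a)
    finally show ?thesis using n2 Suc by simp
  qed
  show ?case using A B by blast
qed


lemma LC_a: "of_nat (i+1) * LC (Suc n) (Suc i) = of_nat (n+1+i) * LC n i"
  using LC_ab by blast
lemma LC_b: "(of_nat i - of_nat n - 1) * LC (Suc n) i = of_nat (i+1) * LC n (Suc i)"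
  using LC_ab by blast

lemma LC_ode: "of_nat (i+2) * of_nat (i+1) * LC n (i+2) = (of_nat i * of_nat (i+1) - of_nat n * of_nat (n+1)) * LC n i"
proof (cases n)
  case 0
  then show ?thesis by (simp only: LC0) auto
next
  case (Suc k)
  have "of_nat (i+1) * (of_nat (i+2) * LC (Suc k) (Suc (Suc i))) = of_nat (i+1) * (of_nat (k+1+Suc i) * LC k (Suc i))"
    using LC_a[of "Suc i" k] by (simp add: numeral_2_eq_2)
  also have "\<dots> = of_nat (k+1+Suc i) * (of_nat (i+1) * LC k (Suc i))" by (simp add: algebra_simps)
  also have "\<dots> = of_nat (k+1+Suc i) * ((of_nat i - of_nat k - 1) * LC (Suc k) i)" by (simp only: LC_b)
  finally show ?thesis using Suc by (simp add: numeral_2_eq_2 algebra_simps)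
qed

lemma LC_deg: "n < i \<Longrightarrow> LC n i = 0"
proof (induct n arbitrary: i)
  case 0 then show ?case by (simp only: LC0) auto
next
  case (Suc n)
  then obtain j where j: "i = Suc j" "n < j" by (cases i) auto
  have "of_nat (j+1) * LC (Suc n) (Suc j) = 0" using LC_a[of j n] Suc(1)[OF j(2)] by simp
  then show ?case using j nzS[of j] by simp
qed

lemma LC_lead: "LC n n \<noteq> 0"
proof (induct n)
  case 0 then show ?case by (simp only: LC0) auto
next
  case (Suc n)
  have "of_nat (n+1) * LC (Suc n) (Suc n) = of_nat (n+1+n) * LC n n" by (rule LC_a)
  moreover have "(of_nat (n+1+n) :: complex) \<noteq> 0" using nzS[of "2*n"] by simp
  ultimately show ?case using Suc by auto
qed



lemma cst3_hom: "cst3 (a * b) = cst3 a * cst3 b" "cst3 (a + b) = cst3 a + cst3 b"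
  "cst3 (a - b) = cst3 a - cst3 b" "cst3 0 = 0" "cst3 1 = 1"
  by (simp_all add: cst3_def pCons_one)

lemma of_nat_cst3: "(of_nat n :: mpoly3) = cst3 (of_nat n)"
  by (induct n) (simp_all add: cst3_hom)

lemma der_1: "is_der f \<Longrightarrow> f 1 = 0"
  using der_simps(2)[of f 1 1] by simp

lemma der_of_nat: "is_der f \<Longrightarrow> f (of_nat n) = 0"
  by (induct n) (simp_all add: der_simps der_1)

lemma der_const_power: "is_der f \<Longrightarrow> f a = 0 \<Longrightarrow> f (a ^ n) = 0"
  by (induct n) (simp_all add: der_simps der_1)

lemma chain:
  assumes f: "is_der f" and c: "\<And>i. f (coeff F i) = 0"
  shows "f (poly F W) = poly (pderiv F) W * f W"
  using c
proof (induct F rule: pCons_induct)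
  case 0 then show ?case using f by (simp add: der_simps)
next
  case (pCons a F)
  have ca: "f a = 0" using pCons.prems[of 0] by simp
  have cF: "f (coeff F i) = 0" for i using pCons.prems[of "Suc i"] by simp
  show ?case using pCons.hyps(2)[OF cF] f ca
    by (simp add: der_simps der_1 pderiv_pCons algebra_simps)
qed

lemma chain_coeff:
  assumes f: "is_der f" and c: "\<And>i. f (coeff F i) = 0"
  shows "f (coeff (pderiv F) i) = 0"
  using f c by (simp add: coeff_pderiv der_simps der_of_nat der_1)

lemma Dop_add: "Dop (p + q) = Dop p + Dop q"
  by (simp add: Dop_def d12_simps d13_simps algebra_simps)
lemma Dop_diff: "Dop (p - q) = Dop p - Dop q"
  by (simp add: Dop_def d12_simps d13_simps algebra_simps)
lemma Dop_0: "Dop 0 = 0"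
  by (simp add: Dop_def d12_simps d13_simps)
lemma Dop_const_mult:
  assumes "d12 q = 0" "d13 q = 0"
  shows "Dop (q * p) = q * Dop p"
  by (simp add: Dop_def d12_simps d13_simps assms algebra_simps)

lemma Dop_sum: "Dop (\<Sum>i\<le>(n::nat). g i) = (\<Sum>i\<le>n. Dop (g i))"
  by (induct n) (simp_all add: Dop_add Dop_0)

definition S3 :: mpoly3 where "S3 = X12 - X13"
definition T3 :: mpoly3 where "T3 = X12 + X13"

lemma dST: "d12 S3 = 1" "d13 S3 = -1" "d12 T3 = 1" "d13 T3 = 1"
  by (simp_all add: S3_def T3_def d12_simps d13_simps d12_basic d13_basic)

lemma ringid:
  fixes x y z A A1 A2 B B1 B2 :: "'a::comm_ring_1"
  shows "x * (y * (A2 * B + 2 * (A1 * B1) + A * B2)) + x * (y * (A2 * B - 2 * (A1 * B1) + A * B2))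
     + (x * (x * (A * B2 - A2 * B)) + y * (y * (A * B2 - A2 * B)) - z * (z * (A * B2 - A2 * B)))
     + (y * (A1 * B + A * B1) + y * (A1 * B + A * B1)) + (x * (A * B1 - A1 * B) + x * (A * B1 - A1 * B))
   = (z^2 * A2 - (x - y)^2 * A2 - 2 * (x - y) * A1) * B - A * (z^2 * B2 - (x + y)^2 * B2 - 2 * (x + y) * B1)"
  by (simp add: algebra_simps power2_eq_square)

lemma Dop_prod:
  assumes F: "\<And>i. d12 (coeff F i) = 0" "\<And>i. d13 (coeff F i) = 0"
    and G: "\<And>i. d12 (coeff G i) = 0" "\<And>i. d13 (coeff G i) = 0"
  shows "Dop (poly F S3 * poly G T3) =
     (X23^2 * poly (pderiv (pderiv F)) S3 - S3^2 * poly (pderiv (pderiv F)) S3 - 2 * S3 * poly (pderiv F) S3) * poly G T3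
     - poly F S3 * (X23^2 * poly (pderiv (pderiv G)) T3 - T3^2 * poly (pderiv (pderiv G)) T3 - 2 * T3 * poly (pderiv G) T3)"
proof -
  have F1: "\<And>i. d12 (coeff (pderiv F) i) = 0" "\<And>i. d13 (coeff (pderiv F) i) = 0"
    using chain_coeff[OF is_der_d12 F(1)] chain_coeff[OF is_der_d13 F(2)] by auto
  have G1: "\<And>i. d12 (coeff (pderiv G) i) = 0" "\<And>i. d13 (coeff (pderiv G) i) = 0"
    using chain_coeff[OF is_der_d12 G(1)] chain_coeff[OF is_der_d13 G(2)] by auto
  define A where "A = poly F S3"
  define A1 where "A1 = poly (pderiv F) S3"
  define A2 where "A2 = poly (pderiv (pderiv F)) S3"
  define B where "B = poly G T3"
  define B1 where "B1 = poly (pderiv G) T3"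
  define B2 where "B2 = poly (pderiv (pderiv G)) T3"
  have dA: "d12 A = A1" "d13 A = - A1" "d12 A1 = A2" "d13 A1 = - A2"
    unfolding A_def A1_def A2_def
    by (simp_all add: chain[OF is_der_d12 F(1)] chain[OF is_der_d13 F(2)] chain[OF is_der_d12 F1(1)]
       chain[OF is_der_d13 F1(2)] dST)
  have dB: "d12 B = B1" "d13 B = B1" "d12 B1 = B2" "d13 B1 = B2"
    unfolding B_def B1_def B2_def
    by (simp_all add: chain[OF is_der_d12 G(1)] chain[OF is_der_d13 G(2)] chain[OF is_der_d12 G1(1)]
       chain[OF is_der_d13 G1(2)] dST)
  have e1: "d12 (d12 (A*B)) = A2 * B + 2 * (A1 * B1) + A * B2"
    by (simp add: d12_simps dA dB algebra_simps)
  have e2: "d13 (d13 (A*B)) = A2 * B - 2 * (A1 * B1) + A * B2"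
    by (simp add: d13_simps dA dB algebra_simps)
  have e3: "d12 (d13 (A*B)) = A * B2 - A2 * B"
    by (simp add: d12_simps d13_simps dA dB algebra_simps)
  have e4: "d12 (A*B) = A1 * B + A * B1"
    by (simp add: d12_simps dA dB algebra_simps)
  have e5: "d13 (A*B) = A * B1 - A1 * B"
    by (simp add: d13_simps dA dB algebra_simps)
  have "Dop (A * B) = (X23^2 * A2 - S3^2 * A2 - 2 * S3 * A1) * B - A * (X23^2 * B2 - T3^2 * B2 - 2 * T3 * B1)"
    unfolding Dop_def e1 e2 e3 unfolding e4 e5
    by (rule ringid[where x=X12 and y=X13 and z=X23, folded S3_def T3_def])
  then show ?thesis by (simp only: A_def A1_def A2_def B_def B1_def B2_def)
qed



definition HF :: "nat \<Rightarrow> mpoly3 poly" where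
  "HF k = (\<Sum>i\<le>k. monom (cst3 (LC k i) * X23^(k-i)) i)"

lemma cst3_of_nat: "cst3 (of_nat n) = of_nat n"
  by (simp add: of_nat_cst3)
lemma cst3_numeral: "cst3 (numeral n) = numeral n"
  by (metis cst3_of_nat of_nat_numeral)

lemma coeff_HF: "coeff (HF k) i = cst3 (LC k i) * X23^(k-i)"
proof (cases "i \<le> k")
  case True
  then show ?thesis by (simp add: HF_def coeff_sum)
next
  case False
  then show ?thesis by (simp add: HF_def coeff_sum LC_deg cst3_hom)
qed

lemma HF_const: "d12 (coeff (HF k) i) = 0" "d13 (coeff (HF k) i) = 0"
  by (simp_all add: coeff_HF d12_simps d13_simps d12_basic d13_basic
      der_const_power[OF is_der_d12] der_const_power[OF is_der_d13])

lemma poly_HF: "poly (HF k) W = (\<Sum>i\<le>k. cst3 (LC k i) * X23^(k-i) * W^i)"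
  by (simp add: HF_def poly_sum poly_monom)

lemma key:
  "X23^2 * (of_nat (i+1) * (of_nat (i+2) * (cst3 (LC k (i+2)) * X23^(k-(i+2)))))
   = (of_nat i * of_nat (i+1) - of_nat (k*(k+1))) * (cst3 (LC k i) * X23^(k-i))"
proof -
  have ode: "of_nat (i+2) * of_nat (i+1) * LC k (i+2) = (of_nat i * of_nat (i+1) - of_nat k * of_nat (k+1)) * LC k i"
    by (rule LC_ode)
  show ?thesis
  proof (cases "i + 2 \<le> k")
    case True
    then have e: "k - i = 2 + (k - (i+2))" by simp
    define Z' where "Z' = X23^(k-(i+2))"
    have P: "X23^(k-i) = X23^2 * Z'" unfolding Z'_def by (simp only: e power_add)
    have c: "cst3 (of_nat (i+1) * (of_nat (i+2) * LC k (i+2))) = cst3 ((of_nat i * of_nat (i+1) - of_nat (k*(k+1))) * LC k i)"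
    proof -
      have "of_nat (i+1) * (of_nat (i+2) * LC k (i+2)) = (of_nat (i+2) * of_nat (i+1) * LC k (i+2) :: complex)"
        by (simp only: mult_ac)
      also have "\<dots> = (of_nat i * of_nat (i+1) - of_nat k * of_nat (k+1)) * LC k i" by (rule ode)
      also have "\<dots> = (of_nat i * of_nat (i+1) - of_nat (k*(k+1))) * LC k i" by (simp only: of_nat_mult)
      finally show ?thesis by (simp only:)
    qed
    have "X23^2 * (of_nat (i+1) * (of_nat (i+2) * (cst3 (LC k (i+2)) * X23^(k-(i+2)))))
        = cst3 (of_nat (i+1) * (of_nat (i+2) * LC k (i+2))) * (X23^2 * Z')"
      unfolding Z'_def by (simp add: cst3_of_nat cst3_numeral cst3_hom algebra_simps)
    also have "\<dots> = cst3 ((of_nat i * of_nat (i+1) - of_nat (k*(k+1))) * LC k i) * (X23^2 * Z')"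
      by (simp only: c)
    also have "\<dots> = (of_nat i * of_nat (i+1) - of_nat (k*(k+1))) * (cst3 (LC k i) * X23^(k-i))"
      unfolding P by (simp add: cst3_of_nat cst3_numeral cst3_hom algebra_simps)
    finally show ?thesis .
  next
    case False
    then have z: "LC k (i+2) = 0" by (intro LC_deg) simp
    then have "(of_nat i * of_nat (i+1) - of_nat k * of_nat (k+1)) * LC k i = 0" using ode by simp
    then have z2: "(of_nat i * of_nat (i+1) - of_nat (k*(k+1))) * LC k i = 0" by (simp only: of_nat_mult)
    have "(of_nat i * of_nat (i+1) - of_nat (k*(k+1))) * (cst3 (LC k i) * X23^(k-i))
       = cst3 ((of_nat i * of_nat (i+1) - of_nat (k*(k+1))) * LC k i) * X23^(k-i)"
      by (simp add: cst3_of_nat cst3_numeral cst3_hom algebra_simps)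
    also have "\<dots> = 0" by (simp only: z2) (simp add: cst3_hom)
    finally show ?thesis using z by (simp add: cst3_hom)
  qed
qed

lemma coeff_x_mult: "coeff ([:0,1:] * (p :: 'a::comm_semiring_1 poly)) i = (if i = 0 then 0 else coeff p (i - 1))"
  by (cases i) simp_all

lemma HF_ode:
  "smult (X23^2) (pderiv (pderiv (HF k))) - [:0,1:] * ([:0,1:] * pderiv (pderiv (HF k)))
    - smult 2 ([:0,1:] * pderiv (HF k)) + smult (of_nat (k*(k+1))) (HF k) = 0"
proof (rule poly_eqI)
  fix i :: nat
  consider "i = 0" | "i = 1" | j where "i = j + 2" by (metis add_2_eq_Suc' not0_implies_Suc One_nat_def)
  then show "coeff (smult (X23^2) (pderiv (pderiv (HF k))) - [:0,1:] * ([:0,1:] * pderiv (pderiv (HF k)))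
    - smult 2 ([:0,1:] * pderiv (HF k)) + smult (of_nat (k*(k+1))) (HF k)) i = coeff 0 i"
  proof cases
    case 1
    show ?thesis using key[of 0 k] 1
      by (simp add: coeff_pderiv coeff_HF numeral_2_eq_2 algebra_simps)
  next
    case 2
    show ?thesis using key[of 1 k] 2
      by (simp add: coeff_pderiv coeff_HF numeral_2_eq_2 numeral_3_eq_3 algebra_simps)
  next
    case 3
    show ?thesis using key[of "j+2" k] 3
      by (simp add: coeff_pderiv coeff_HF coeff_x_mult numeral_2_eq_2 numeral_3_eq_3 algebra_simps)
  qed
qed


lemma HF_eval:
  "X23^2 * poly (pderiv (pderiv (HF k))) W - W^2 * poly (pderiv (pderiv (HF k))) W - 2 * W * poly (pderiv (HF k)) W
   = - (of_nat (k*(k+1)) * poly (HF k) W)"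
proof -
  have "poly (smult (X23^2) (pderiv (pderiv (HF k))) - [:0,1:] * ([:0,1:] * pderiv (pderiv (HF k)))
    - smult 2 ([:0,1:] * pderiv (HF k)) + smult (of_nat (k*(k+1))) (HF k)) W = 0"
    by (simp only: HF_ode) simp
  then show ?thesis by (simp add: algebra_simps power2_eq_square eq_neg_iff_add_eq_0)
qed

lemma Dop_HF: "Dop (poly (HF l) S3 * poly (HF l) T3) = 0"
  by (simp add: Dop_prod HF_const HF_eval)

lemma frakP_factor:
  assumes "2 * l \<le> m"
  shows "frakP m l l = X23^(m - 2*l) * (poly (HF l) S3 * poly (HF l) T3)"
proof -
  have "X23^(m - 2*l) * (poly (HF l) S3 * poly (HF l) T3)
     = (\<Sum>i\<le>l. \<Sum>j\<le>l. X23^(m - 2*l) * ((cst3 (LC l i) * X23^(l-i) * S3^i) * (cst3 (LC l j) * X23^(l-j) * T3^j)))"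
    unfolding poly_HF sum_product by (simp only: sum_distrib_left)
  also have "\<dots> = (\<Sum>i\<le>l. \<Sum>j\<le>l. cst3 (LC l i * LC l j) * (X12 - X13) ^ i * (X12 + X13) ^ j * X23 ^ (m - i - j))"
  proof (intro sum.cong refl)
    fix i j assume i: "i \<in> {..l}" and j: "j \<in> {..l}"
    then have e: "m - i - j = (m - 2*l) + (l - i) + (l - j)" using assms by auto
    show "X23^(m - 2*l) * ((cst3 (LC l i) * X23^(l-i) * S3^i) * (cst3 (LC l j) * X23^(l-j) * T3^j))
       = cst3 (LC l i * LC l j) * (X12 - X13) ^ i * (X12 + X13) ^ j * X23 ^ (m - i - j)"
      unfolding e power_add S3_def T3_def cst3_hom by (simp add: algebra_simps)
  qed
  finally show ?thesis by (simp add: frakP_def)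
qed

lemma d_Z_pow: "d12 (X23^e) = 0" "d13 (X23^e) = 0"
  by (simp_all add: der_const_power[OF is_der_d12] der_const_power[OF is_der_d13] d12_basic d13_basic)

lemma Dop_frakP: "2 * l \<le> m \<Longrightarrow> Dop (frakP m l l) = 0"
  by (simp add: frakP_factor Dop_const_mult d_Z_pow Dop_HF)



definition Eu :: "mpoly3 \<Rightarrow> mpoly3" where
  "Eu p = X12 * d12 p + X13 * d13 p + X23 * pderiv p"

lemma is_der_Eu: "is_der Eu"
  unfolding is_der_def Eu_def by (simp add: d12_simps d13_simps pderiv_add pderiv_mult algebra_simps)

lemma mcoeff_Eu: "mcoeff (Eu p) a b c = of_nat (a+b+c) * mcoeff p a b c"
  unfolding Eu_def
  by (cases a; cases b; cases c) (simp_all add: mcoeff_simps mcoeff_X12 mcoeff_X13 mcoeff_X23 mcoeff_d12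
      mcoeff_d13 mcoeff_d23 algebra_simps)

lemma Eu_basic: "Eu (cst3 k) = 0" "Eu S3 = S3" "Eu T3 = T3" "Eu X23 = X23"
  by (simp_all add: Eu_def S3_def T3_def d12_simps d13_simps d12_basic d13_basic d23_basic pderiv_add pderiv_diff)

lemma Eu_pow:
  assumes "Eu W = W" shows "Eu (W ^ n) = of_nat n * W ^ n"
proof (cases n)
  case 0 then show ?thesis by (simp add: der_1[OF is_der_Eu])
next
  case (Suc k)
  have "Eu (W ^ Suc k) = of_nat (Suc k) * W ^ k * Eu W" by (rule der_power[OF is_der_Eu])
  then show ?thesis using Suc assms by (simp add: algebra_simps)
qed

lemma Eu_mult_eig: "Eu x = \<alpha> * x \<Longrightarrow> Eu y = \<beta> * y \<Longrightarrow> Eu (x * y) = (\<alpha> + \<beta>) * (x * y)"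
  by (simp add: der_simps[OF is_der_Eu] algebra_simps)

lemma Eu_frakP:
  assumes "2 * l \<le> m"
  shows "Eu (frakP m l l) = of_nat m * frakP m l l"
proof -
  have "Eu (frakP m l l) = (\<Sum>i\<le>l. \<Sum>j\<le>l. Eu (cst3 (LC l i * LC l j) * S3 ^ i * T3 ^ j * X23 ^ (m - i - j)))"
    unfolding frakP_def S3_def[symmetric] T3_def[symmetric] by (simp add: is_der_sum[OF is_der_Eu])
  also have "\<dots> = (\<Sum>i\<le>l. \<Sum>j\<le>l. of_nat m * (cst3 (LC l i * LC l j) * S3 ^ i * T3 ^ j * X23 ^ (m - i - j)))"
  proof (intro sum.cong refl)
    fix i j assume "i \<in> {..l}" "j \<in> {..l}"
    then have "i + j \<le> m" using assms by auto
    then have e: "0 + of_nat i + of_nat j + of_nat (m - i - j) = (of_nat m :: mpoly3)"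
      by (metis add_0 of_nat_add le_add_diff_inverse diff_diff_left)
    have "Eu (cst3 (LC l i * LC l j) * S3 ^ i * T3 ^ j * X23 ^ (m - i - j)) =
        (0 + of_nat i + of_nat j + of_nat (m - i - j)) * (cst3 (LC l i * LC l j) * S3 ^ i * T3 ^ j * X23 ^ (m - i - j))"
      by (intro Eu_mult_eig Eu_pow Eu_basic) (simp add: Eu_basic)
    then show "Eu (cst3 (LC l i * LC l j) * S3 ^ i * T3 ^ j * X23 ^ (m - i - j)) =
        of_nat m * (cst3 (LC l i * LC l j) * S3 ^ i * T3 ^ j * X23 ^ (m - i - j))"
      by (simp only: e)
  qed
  also have "\<dots> = of_nat m * frakP m l l"
    unfolding frakP_def S3_def[symmetric] T3_def[symmetric] by (simp add: sum_distrib_left)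
  finally show ?thesis .
qed

lemma homog_of_Eu:
  assumes "Eu p = of_nat m * p" shows "homogeneous3 m p"
  unfolding homogeneous3_def
proof (intro allI impI)
  fix a b c assume nz: "mcoeff p a b c \<noteq> 0"
  have "of_nat (a+b+c) * mcoeff p a b c = of_nat m * mcoeff p a b c"
    using arg_cong[OF assms, of "\<lambda>q. mcoeff q a b c"] by (simp add: mcoeff_Eu of_nat_cst3 mcoeff_simps)
  then have "(of_nat (a+b+c) :: complex) = of_nat m" using nz by simp
  then show "a + b + c = m" by (simp only: of_nat_eq_iff)
qed

lemma homog_frakP: "2 * l \<le> m \<Longrightarrow> homogeneous3 m (frakP m l l)"
  by (intro homog_of_Eu Eu_frakP)

lemma mcoeff_Zpow: "mcoeff (X23^e * q) a b c = (if c < e then 0 else mcoeff q a b (c - e))"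
proof (induct e arbitrary: c)
  case 0 then show ?case by simp
next
  case (Suc e)
  have "mcoeff (X23^Suc e * q) a b c = mcoeff (X23 * (X23^e * q)) a b c" by (simp add: mult.assoc)
  also have "\<dots> = (if c < Suc e then 0 else mcoeff q a b (c - Suc e))"
    by (cases c) (simp_all add: mcoeff_X23 Suc)
  finally show ?case .
qed

lemma mcoeff_Spow: "mcoeff (S3^i * q) 0 b c = (if b < i then 0 else (-1)^i * mcoeff q 0 (b - i) c)"
proof (induct i arbitrary: b)
  case 0 then show ?case by simp
next
  case (Suc i)
  have "mcoeff (S3^Suc i * q) 0 b c = mcoeff (X12 * (S3^i * q)) 0 b c - mcoeff (X13 * (S3^i * q)) 0 b c"
    by (simp add: S3_def algebra_simps mcoeff_simps)
  also have "\<dots> = (if b < Suc i then 0 else (-1)^Suc i * mcoeff q 0 (b - Suc i) c)"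
    by (cases b) (simp_all add: mcoeff_X12 mcoeff_X13 Suc)
  finally show ?case .
qed

lemma mcoeff_Tpow: "mcoeff (T3^i * q) 0 b c = (if b < i then 0 else mcoeff q 0 (b - i) c)"
proof (induct i arbitrary: b)
  case 0 then show ?case by simp
next
  case (Suc i)
  have "mcoeff (T3^Suc i * q) 0 b c = mcoeff (X12 * (T3^i * q)) 0 b c + mcoeff (X13 * (T3^i * q)) 0 b c"
    by (simp add: T3_def algebra_simps mcoeff_simps)
  also have "\<dots> = (if b < Suc i then 0 else mcoeff q 0 (b - Suc i) c)"
    by (cases b) (simp_all add: mcoeff_X12 mcoeff_X13 Suc)
  finally show ?case .
qed

lemma mcoeff_sum: "mcoeff (\<Sum>i\<in>A. f i) a b c = (\<Sum>i\<in>A. mcoeff (f i) a b c)"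
  by (simp add: mcoeff_def coeff_sum)

lemma frakP_term: "cst3 (LC l i * LC l j) * (X12 - X13) ^ i * (X12 + X13) ^ j * X23 ^ e
   = X23^e * (cst3 (LC l i * LC l j) * (S3^i * (T3^j * 1)))"
  by (simp add: S3_def T3_def algebra_simps)

lemma frakP_level:
  assumes "2 * l \<le> m" "mcoeff (frakP m l l) a b c \<noteq> 0"
  shows "a + b \<le> 2 * l"
proof (rule ccontr)
  assume "\<not> a + b \<le> 2 * l"
  moreover have "a + b + c = m" using homog_frakP[OF assms(1)] assms(2) by (simp add: homogeneous3_def)
  ultimately have "mcoeff (frakP m l l) a b c = 0"
    unfolding frakP_def frakP_term mcoeff_sum mcoeff_Zpow
    by (intro sum.neutral ballI) auto
  then show False using assms(2) by simp
qed

lemma double_single: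
  fixes g :: "nat \<Rightarrow> nat \<Rightarrow> 'a::comm_monoid_add"
  assumes "\<And>i j. i \<le> l \<Longrightarrow> j \<le> l \<Longrightarrow> (i, j) \<noteq> (l, l) \<Longrightarrow> g i j = 0"
  shows "(\<Sum>i\<le>l. \<Sum>j\<le>l. g i j) = g l l"
proof -
  have inner: "(\<Sum>j\<le>l. g i j) = (if i = l then g l l else 0)" if "i \<le> l" for i
  proof -
    have "(\<Sum>j\<le>l. g i j) = g i l + (\<Sum>j\<in>{..l} - {l}. g i j)" by (simp add: sum.remove)
    also have "(\<Sum>j\<in>{..l} - {l}. g i j) = 0" using that by (intro sum.neutral) (auto intro: assms)
    finally show ?thesis using assms[of i l] that by auto
  qed
  have "(\<Sum>i\<le>l. \<Sum>j\<le>l. g i j) = (\<Sum>i\<le>l. if i = l then g l l else 0)"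
    by (intro sum.cong refl) (simp add: inner)
  also have "\<dots> = g l l" by (simp add: sum.delta)
  finally show ?thesis .
qed

lemma frakP_lead:
  assumes "2 * l \<le> m"
  shows "mcoeff (frakP m l l) 0 (2*l) (m - 2*l) = (-1)^l * (LC l l * LC l l)"
proof -
  have "mcoeff (frakP m l l) 0 (2*l) (m - 2*l) =
     (\<Sum>i\<le>l. \<Sum>j\<le>l. (if m - 2*l < m - i - j then 0 else
        mcoeff (cst3 (LC l i * LC l j) * (S3^i * (T3^j * 1))) 0 (2*l) (m - 2*l - (m - i - j))))"
    unfolding frakP_def frakP_term mcoeff_sum mcoeff_Zpow by simp
  also have "\<dots> = mcoeff (cst3 (LC l l * LC l l) * (S3^l * (T3^l * 1))) 0 (2*l) 0"
    by (subst double_single) (use assms in auto)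
  also have "\<dots> = (-1)^l * (LC l l * LC l l)"
    by (simp only: mcoeff_simps mcoeff_Spow mcoeff_Tpow) (simp add: mcoeff_def)
  finally show ?thesis .
qed

lemma frakP_lead_nz: "2 * l \<le> m \<Longrightarrow> mcoeff (frakP m l l) 0 (2*l) (m - 2*l) \<noteq> 0"
  by (simp add: frakP_lead LC_lead)



lemma homog_sum: "(\<And>i. i \<in> A \<Longrightarrow> homogeneous3 m (f i)) \<Longrightarrow> homogeneous3 m (\<Sum>i\<in>A. f i)"
  unfolding homogeneous3_def mcoeff_sum
  by (metis (mono_tags, lifting) sum.neutral)

lemma homog_cmult: "homogeneous3 m p \<Longrightarrow> homogeneous3 m (cst3 k * p)"
  unfolding homogeneous3_def by (simp add: mcoeff_simps)

lemma homog_diff: "homogeneous3 m p \<Longrightarrow> homogeneous3 m q \<Longrightarrow> homogeneous3 m (p - q)"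
  unfolding homogeneous3_def by (metis mcoeff_simps(2) diff_self)

lemma Dop_cmult: "Dop (cst3 k * p) = cst3 k * Dop p"
  by (rule Dop_const_mult) (simp_all add: d12_basic d13_basic)

lemma span_sub:
  fixes m :: nat
  defines "FF \<equiv> \<lambda>l. frakP m l l"
  shows "homogeneous3 m p \<Longrightarrow> Dop p = 0 \<Longrightarrow> (\<forall>a b c. N \<le> a + b \<longrightarrow> mcoeff p a b c = 0) \<Longrightarrow>
    (\<exists>cf. (\<forall>l. N \<le> 2*l \<longrightarrow> cf l = 0) \<and> p = (\<Sum>l\<le>m div 2. cst3 (cf l) * FF l))"
proof (induct N arbitrary: p)
  case 0
  then have "p = 0" by (simp add: mpoly_eq_iff mcoeff_simps)
  then show ?case by (intro exI[of _ "\<lambda>_. 0"]) (simp add: cst3_hom)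
next
  case (Suc N)
  have hz: "\<And>a b c. N < a + b \<Longrightarrow> mcoeff p a b c = 0" using Suc.prems(3) by auto
  show ?case
  proof (cases "odd N \<or> m < N")
    case True
    have lz: "mcoeff p a b c = 0" if "a + b = N" for a b c
    proof (cases "odd N")
      case True
      then show ?thesis using level_zero[OF Suc.prems(2) hz _ that] by blast
    next
      case False
      with \<open>odd N \<or> m < N\<close> have "m < N" by blast
      then show ?thesis using Suc.prems(1) that unfolding homogeneous3_def by fastforce
    qed
    have "\<forall>a b c. N \<le> a + b \<longrightarrow> mcoeff p a b c = 0"
      using hz lz by (metis le_neq_implies_less)
    from Suc.hyps[OF Suc.prems(1,2) this] obtain cf where
      "\<forall>l. N \<le> 2*l \<longrightarrow> cf l = 0" "p = (\<Sum>l\<le>m div 2. cst3 (cf l) * FF l)" by blast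
    then show ?thesis by (intro exI[of _ cf]) auto
  next
    case False
    then obtain l0 where N: "N = 2 * l0" and Nm: "N \<le> m" by (auto elim: evenE)
    have l0: "l0 \<in> {..m div 2}" using N Nm by auto
    have Fh: "homogeneous3 m (FF l0)" unfolding FF_def using N Nm by (intro homog_frakP) simp
    have FD: "Dop (FF l0) = 0" unfolding FF_def using N Nm by (intro Dop_frakP) simp
    have Fl: "mcoeff (FF l0) a b c = 0" if "N < a + b" for a b c
      using frakP_level[of l0 m a b c] N Nm that unfolding FF_def by fastforce
    define lead where "lead = mcoeff (FF l0) 0 N (m - N)"
    have lnz: "lead \<noteq> 0" unfolding lead_def FF_def N using frakP_lead_nz[of l0 m] N Nm by simp
    define \<kappa> where "\<kappa> = mcoeff p 0 N (m - N) / lead"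
    define p' where "p' = p - cst3 \<kappa> * FF l0"
    have h': "homogeneous3 m p'" unfolding p'_def by (intro homog_diff homog_cmult Suc.prems(1) Fh)
    have D': "Dop p' = 0" unfolding p'_def by (simp add: Dop_diff Dop_cmult FD Suc.prems(2))
    have hz': "mcoeff p' a b c = 0" if "N < a + b" for a b c
      unfolding p'_def by (simp add: mcoeff_simps hz Fl that)
    have z0: "\<forall>c. mcoeff p' 0 N c = 0"
    proof
      fix c
      show "mcoeff p' 0 N c = 0"
      proof (cases "c = m - N")
        case True
        then show ?thesis unfolding p'_def \<kappa>_def using lnz by (simp add: mcoeff_simps lead_def)
      next
        case False
        then have "0 + N + c \<noteq> m" using Nm by auto
        then show ?thesis using h' unfolding homogeneous3_def by blast
      qed
    qed
    have lz: "mcoeff p' a b c = 0" if "a + b = N" for a b c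
      using level_zero[OF D' hz' _ that] z0 by blast
    have "\<forall>a b c. N \<le> a + b \<longrightarrow> mcoeff p' a b c = 0"
      using hz' lz by (metis le_neq_implies_less)
    from Suc.hyps[OF h' D' this] obtain cf where
      cf0: "\<forall>l. N \<le> 2*l \<longrightarrow> cf l = 0" and p'eq: "p' = (\<Sum>l\<le>m div 2. cst3 (cf l) * FF l)" by blast
    define cf' where "cf' = cf(l0 := \<kappa>)"
    have "p = p' + cst3 \<kappa> * FF l0" unfolding p'_def by simp
    also have "\<dots> = (\<Sum>l\<le>m div 2. cst3 (cf' l) * FF l)"
    proof -
      have "(\<Sum>l\<le>m div 2. cst3 (cf' l) * FF l) = cst3 \<kappa> * FF l0 + (\<Sum>l\<in>{..m div 2} - {l0}. cst3 (cf' l) * FF l)"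
        using l0 by (simp add: sum.remove cf'_def)
      moreover have "p' = cst3 (cf l0) * FF l0 + (\<Sum>l\<in>{..m div 2} - {l0}. cst3 (cf l) * FF l)"
        using l0 p'eq by (simp add: sum.remove)
      moreover have "cf l0 = 0" using cf0 N by simp
      moreover have "(\<Sum>l\<in>{..m div 2} - {l0}. cst3 (cf' l) * FF l) = (\<Sum>l\<in>{..m div 2} - {l0}. cst3 (cf l) * FF l)"
        by (intro sum.cong refl) (simp add: cf'_def)
      ultimately show ?thesis by (simp add: cst3_hom)
    qed
    finally show ?thesis
      by (intro exI[of _ cf']) (use cf0 N in \<open>auto simp: cf'_def\<close>)
  qed
qed

theorem mainTheorem19:
  fixes m :: nat
  shows "{p. homogeneous3 m p \<and> p \<in> kerH1} =
         {p. \<exists>c :: nat \<Rightarrow> complex. p = (\<Sum>l\<le>m div 2. cst3 (c l) * frakP m l l)}"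
proof (intro set_eqI iffI; simp only: mem_Collect_eq)
  fix p assume "homogeneous3 m p \<and> p \<in> kerH1"
  then have h: "homogeneous3 m p" and D: "Dop p = 0" by (auto simp: kerH1_iff)
  have "\<forall>a b c. Suc m \<le> a + b \<longrightarrow> mcoeff p a b c = 0"
    using h unfolding homogeneous3_def by fastforce
  from span_sub[OF h D this] show "\<exists>c :: nat \<Rightarrow> complex. p = (\<Sum>l\<le>m div 2. cst3 (c l) * frakP m l l)"
    by blast
next
  fix p assume "\<exists>c :: nat \<Rightarrow> complex. p = (\<Sum>l\<le>m div 2. cst3 (c l) * frakP m l l)"
  then obtain c where p: "p = (\<Sum>l\<le>m div 2. cst3 (c l) * frakP m l l)" by blast
  have "homogeneous3 m p" unfolding p
    by (intro homog_sum homog_cmult homog_frakP) auto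
  moreover have "Dop p = 0" unfolding p
    by (simp add: Dop_sum Dop_cmult Dop_frakP)
  ultimately show "homogeneous3 m p \<and> p \<in> kerH1" by (simp add: kerH1_iff)
qed


end
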